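(* Let $\lambda,\mu$ be partitions and $x$ an indeterminate. Put $$X_{\lambda\mu}(x):=\prod_{(i,j)\in[\mu]}(j-i-x)\prod_{(i,j)\in [\lambda]}\biggl((j-i-\mu_1+x)\prod_{1\le k\le\mu_1}\frac{j-i+\bar{\mu}_k-k+1+x}{j-i+\bar{\mu}_k-k+x}\biggr)$$ and, for a non-negative integer $L$, $$Y^{L}_{\lambda\mu}(x):=(-1)^{\binom L2}x^L\,\frac{\displaystyle\prod_{a\in B_L^\lambda}\prod_{1\leq i\leq a}(i+x)\prod_{b\in B_L^\mu}\prod_{1\le j\le b}(j-x)}{\displaystyle\prod_{(a,b)\in B_L^\lambda\times B_L^\mu}(a-b+x)}.$$ Then $X_{\lambda\mu}(x)=Y^L_{\lambda\mu}(x)$ for every integer $L\geq \max\{\ell(\lambda), \ell(\mu)\}$.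
   Context: For a partition $\lambda=(\lambda_1\ge\lambda_2\ge\cdots)$, $\ell(\lambda)$ is the number of nonzero parts, $[\lambda]=\{(i,j): i\ge1,\ 1\le j\le\lambda_i\}$ is its diagram, and $\bar\lambda$ is the conjugate partition ($\bar\lambda_k$ = number of $i$ with $\lambda_i\ge k$). For an integer $L\ge\ell(\lambda)$, the set of $L$-beta numbers of $\lambda$ is $B^\lambda_L=\{\lambda_i+L-i : 1\le i\le L\}$ (with $\lambda_i=0$ for $i>\ell(\lambda)$). *)

theory Defs
  imports "HOL-Computational_Algebra.Polynomial" "HOL-Computational_Algebra.Fraction_Field"
begin

definition is_partition :: "nat list \<Rightarrow> bool" where
  "is_partition lam \<longleftrightarrow> sorted_wrt (\<ge>) lam \<and> 0 \<notin> set lam"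

text \<open>1-indexed parts, with lam_i = 0 for i beyond the length (and for i = 0).\<close>
definition part :: "nat list \<Rightarrow> nat \<Rightarrow> nat" where
  "part lam i = (if 1 \<le> i \<and> i \<le> length lam then lam ! (i - 1) else 0)"

text \<open>The length ell(lam) is the number of nonzero parts, i.e. length lam.\<close>
definition plen :: "nat list \<Rightarrow> nat" where
  "plen lam = length lam"

definition diagram :: "nat list \<Rightarrow> (nat \<times> nat) set" where
  "diagram lam = {(i, j). 1 \<le> i \<and> 1 \<le> j \<and> j \<le> part lam i}"

definition conjp :: "nat list \<Rightarrow> nat \<Rightarrow> nat" where
  "conjp lam k = card {i. 1 \<le> i \<and> k \<le> part lam i}"

definition beta_set :: "nat \<Rightarrow> nat list \<Rightarrow> nat set" where
  "beta_set L lam = {part lam i + L - i | i. 1 \<le> i \<and> i \<le> L}"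

definition xind :: "rat poly fract" where
  "xind = Fract [:0, 1:] 1"

definition Xfun :: "nat list \<Rightarrow> nat list \<Rightarrow> rat poly fract" where
  "Xfun lam mu =
     (\<Prod>(i, j) \<in> diagram mu. of_int (int j - int i) - xind) *
     (\<Prod>(i, j) \<in> diagram lam.
        (of_int (int j - int i - int (part mu 1)) + xind) *
        (\<Prod>k \<in> {1..part mu 1}.
           (of_int (int j - int i + int (conjp mu k) - int k + 1) + xind) /
           (of_int (int j - int i + int (conjp mu k) - int k) + xind)))"

definition Yfun :: "nat \<Rightarrow> nat list \<Rightarrow> nat list \<Rightarrow> rat poly fract" where
  "Yfun L lam mu =
     (-1) ^ (L choose 2) * xind ^ L *
     ((\<Prod>a \<in> beta_set L lam. \<Prod>i \<in> {1..a}. of_nat i + xind) *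
      (\<Prod>b \<in> beta_set L mu. \<Prod>j \<in> {1..b}. of_nat j - xind)) /
     (\<Prod>(a, b) \<in> beta_set L lam \<times> beta_set L mu. of_int (int a - int b) + xind)"

end

theory Submission
  imports Defs
begin


lemma tele:
  fixes h :: "nat \<Rightarrow> 'a::field"
  assumes "\<And>i. h i \<noteq> 0"
  shows "(\<Prod>i\<in>{1..n}. h i / h (i - 1)) = h n / h 0"
proof (induction n)
  case 0 then show ?case using assms by simp
next
  case (Suc n)
  have "(\<Prod>i\<in>{1..Suc n}. h i / h (i - 1)) = (\<Prod>i\<in>{1..n}. h i / h (i - 1)) * (h (Suc n) / h n)"
    by (simp add: prod.nat_ivl_Suc')
  also have "\<dots> = h (Suc n) / h 0" using Suc assms[of n] by (simp add: field_simps)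
  finally show ?case .
qed

definition nzall :: "'a::field \<Rightarrow> bool" where
  "nzall y \<longleftrightarrow> (\<forall>c::int. y + of_int c \<noteq> 0)"

definition sh :: "'a::field \<Rightarrow> int \<Rightarrow> 'a" where
  "sh y c = y + of_int c"

lemma sh_nz[simp]: "nzall y \<Longrightarrow> sh y c \<noteq> 0"
  by (simp add: nzall_def sh_def)

lemma sh_add: "sh y (c + d) = sh y c + of_int d"
  by (simp add: sh_def)

lemma sh_shift: "sh y c = sh y d + of_int (c - d)"
  by (simp add: sh_def)

definition phi :: "'a::field \<Rightarrow> 'a" where
  "phi z = (z + 1) * (z - 1) / (z * z)"

lemma K1:
  fixes y :: "'a::field" and k :: int
  assumes nz: "nzall y"
  shows "sh y (int n - k + 1) / sh y (int n - k) =
    sh y (1 - k) / sh y (- k) * (\<Prod>i\<in>{1..n}. phi (sh y (int i - k)))"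
proof -
  define h where "h i = sh y (int i - k + 1) / sh y (int i - k)" for i :: nat
  have hnz: "h i \<noteq> 0" for i
    unfolding h_def using nz by simp
  have "(\<Prod>i\<in>{1..n}. phi (sh y (int i - k))) = (\<Prod>i\<in>{1..n}. h i / h (i - 1))"
  proof (rule prod.cong[OF refl])
    fix i assume "i \<in> {1..n}"
    then have i1: "int (i - 1) = int i - 1" by auto
    define u where "u = sh y (int i - k)"
    have a: "sh y (int i - k + 1) = u + 1" "sh y (int i - 1 - k + 1) = u"
      "sh y (int i - 1 - k) = u - 1"
      unfolding u_def by (simp_all add: sh_def)
    have nz1: "u \<noteq> 0" "u + 1 \<noteq> 0" "u - 1 \<noteq> 0" using a nz u_def by (metis sh_nz)+
    show "phi (sh y (int i - k)) = h i / h (i - 1)"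
      unfolding h_def i1 a u_def[symmetric] phi_def using nz1 by (simp add: field_simps)
  qed
  also have "\<dots> = h n / h 0" by (rule tele[OF hnz])
  finally show ?thesis using hnz[of 0] nz unfolding h_def
    by (simp add: field_simps)
qed

lemma K2:
  fixes y :: "'a::field" and i :: int
  assumes nz: "nzall y"
  shows "sh y (i - int n - 1) / sh y (i - int n) =
    sh y (i - 1) / sh y i * (\<Prod>k\<in>{1..n}. phi (sh y (i - int k)))"
proof -
  define h where "h k = sh y (i - int k - 1) / sh y (i - int k)" for k :: nat
  have hnz: "h k \<noteq> 0" for k
    unfolding h_def using nz by simp
  have "(\<Prod>k\<in>{1..n}. phi (sh y (i - int k))) = (\<Prod>k\<in>{1..n}. h k / h (k - 1))"
  proof (rule prod.cong[OF refl])
    fix k assume "k \<in> {1..n}"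
    then have i1: "int (k - 1) = int k - 1" by auto
    define u where "u = sh y (i - int k)"
    have a: "sh y (i - int k - 1) = u - 1" "sh y (i - (int k - 1) - 1) = u"
      "sh y (i - (int k - 1)) = u + 1"
      unfolding u_def by (simp_all add: sh_def)
    have nz1: "u \<noteq> 0" "u + 1 \<noteq> 0" "u - 1 \<noteq> 0" using a nz u_def by (metis sh_nz)+
    show "phi (sh y (i - int k)) = h k / h (k - 1)"
      unfolding h_def i1 a u_def[symmetric] phi_def using nz1 by (simp add: field_simps)
  qed
  also have "\<dots> = h n / h 0" by (rule tele[OF hnz])
  finally show ?thesis using hnz[of 0] nz unfolding h_def
    by (simp add: field_simps)
qed

lemma K3:
  fixes y :: "'a::field" and c :: int
  assumes nz: "nzall y"
  shows "(\<Prod>i\<in>{1..n}. sh y (c + int i - 1) / sh y (c + int i)) = sh y c / sh y (c + int n)"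
proof -
  define h where "h i = 1 / sh y (c + int i)" for i :: nat
  have hnz: "h i \<noteq> 0" for i
    unfolding h_def using nz by simp
  have "(\<Prod>i\<in>{1..n}. sh y (c + int i - 1) / sh y (c + int i)) = (\<Prod>i\<in>{1..n}. h i / h (i - 1))"
  proof (rule prod.cong[OF refl])
    fix i assume "i \<in> {1..n}"
    then have i1: "int (i - 1) = int i - 1" by auto
    then show "sh y (c + int i - 1) / sh y (c + int i) = h i / h (i - 1)"
      unfolding h_def using nz by (simp add: field_simps)
  qed
  also have "\<dots> = h n / h 0" by (rule tele[OF hnz])
  finally show ?thesis using nz unfolding h_def
    by (simp add: field_simps)
qed

lemma K3':
  fixes y :: "'a::field" and c :: int
  assumes nz: "nzall y"
  shows "(\<Prod>i\<in>{1..n}. sh y (c - int i + 1) / sh y (c - int i)) = sh y c / sh y (c - int n)"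
proof -
  define h where "h i = 1 / sh y (c - int i)" for i :: nat
  have hnz: "h i \<noteq> 0" for i
    unfolding h_def using nz by simp
  have "(\<Prod>i\<in>{1..n}. sh y (c - int i + 1) / sh y (c - int i)) = (\<Prod>i\<in>{1..n}. h i / h (i - 1))"
  proof (rule prod.cong[OF refl])
    fix i assume "i \<in> {1..n}"
    then have i1: "int (i - 1) = int i - 1" by auto
    then show "sh y (c - int i + 1) / sh y (c - int i) = h i / h (i - 1)"
      unfolding h_def using nz by (simp add: field_simps)
  qed
  also have "\<dots> = h n / h 0" by (rule tele[OF hnz])
  finally show ?thesis using nz unfolding h_def
    by (simp add: field_simps)
qed




definition cnj :: "(nat \<Rightarrow> nat) \<Rightarrow> nat \<Rightarrow> nat" where
  "cnj q k = card {i. 1 \<le> i \<and> k \<le> q i}"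

lemma cnj_set:
  assumes Q1: "\<And>i. L < i \<Longrightarrow> q i = 0"
    and Q2: "\<And>i i'. 1 \<le> i \<Longrightarrow> i \<le> i' \<Longrightarrow> q i' \<le> q i"
    and k: "1 \<le> k"
  shows "{i. 1 \<le> i \<and> k \<le> q i} = {1..cnj q k}"
proof -
  let ?S = "{i. 1 \<le> i \<and> k \<le> q i}"
  have sub: "?S \<subseteq> {1..L}"
  proof
    fix i assume "i \<in> ?S"
    then show "i \<in> {1..L}" using Q1[of i] k by (cases "L < i") auto
  qed
  then have fin: "finite ?S" by (rule finite_subset) simp
  show ?thesis
  proof (cases "?S = {}")
    case True then show ?thesis unfolding cnj_def True by simp
  next
    case False
    define m where "m = Max ?S"
    have mS: "m \<in> ?S" unfolding m_def using Max_in[OF fin False] .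
    have "?S = {1..m}"
    proof
      show "?S \<subseteq> {1..m}" using Max_ge[OF fin] m_def by auto
      show "{1..m} \<subseteq> ?S"
      proof
        fix i assume "i \<in> {1..m}"
        then show "i \<in> ?S" using mS Q2[of i m] by auto
      qed
    qed
    then show ?thesis unfolding cnj_def by simp
  qed
qed

lemma swap_memb:
  assumes Q1: "\<And>i. L < i \<Longrightarrow> q i = 0"
    and Q2: "\<And>i i'. 1 \<le> i \<Longrightarrow> i \<le> i' \<Longrightarrow> q i' \<le> q i"
  shows "(k,i) \<in> Sigma {1..q 1} (\<lambda>k. {1..cnj q k}) \<longleftrightarrow> (i,k) \<in> Sigma {1..L} (\<lambda>i. {1..q i})"
proof
  assume a: "(i,k) \<in> Sigma {1..L} (\<lambda>i. {1..q i})"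
  have k1: "1 \<le> k" "k \<le> q i" "1 \<le> i" "i \<le> L" using a by auto
  have S: "{i. 1 \<le> i \<and> k \<le> q i} = {1..cnj q k}" by (rule cnj_set[of L q k, OF Q1 Q2 k1(1)])
  have kq: "k \<le> q 1" using Q2[of 1 i] k1 by simp
  have "i \<in> {i. 1 \<le> i \<and> k \<le> q i}" using k1 by simp
  then have "i \<in> {1..cnj q k}" by (simp only: S)
  then show "(k,i) \<in> Sigma {1..q 1} (\<lambda>k. {1..cnj q k})"
    using kq k1 by simp
next
  assume a: "(k,i) \<in> Sigma {1..q 1} (\<lambda>k. {1..cnj q k})"
  have k1: "1 \<le> k" "k \<le> q 1" "i \<in> {1..cnj q k}" using a by auto
  have S: "{i. 1 \<le> i \<and> k \<le> q i} = {1..cnj q k}" by (rule cnj_set[of L q k, OF Q1 Q2 k1(1)])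
  have "i \<in> {i. 1 \<le> i \<and> k \<le> q i}" using k1(3) by (simp only: S)
  then have i: "1 \<le> i" "k \<le> q i" by simp_all
  have "i \<le> L"
  proof (rule ccontr)
    assume "\<not> i \<le> L"
    then have "q i = 0" using Q1[of i] by simp
    then show False using i k1 by simp
  qed
  then show "(i,k) \<in> Sigma {1..L} (\<lambda>i. {1..q i})" using i k1 by simp
qed

lemma swapK:
  assumes Q1: "\<And>i. L < i \<Longrightarrow> q i = 0"
    and Q2: "\<And>i i'. 1 \<le> i \<Longrightarrow> i \<le> i' \<Longrightarrow> q i' \<le> q i"
  shows "(\<Prod>k\<in>{1..q 1}. \<Prod>i\<in>{1..cnj q k}. F i k) = (\<Prod>i\<in>{1..L}. \<Prod>k\<in>{1..q i}. (F i k :: 'a::comm_monoid_mult))"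
proof -
  have "(\<Prod>k\<in>{1..q 1}. \<Prod>i\<in>{1..cnj q k}. F i k) = (\<Prod>(k,i)\<in>Sigma {1..q 1} (\<lambda>k. {1..cnj q k}). F i k)"
    by (simp add: prod.Sigma)
  also have "\<dots> = (\<Prod>(i,k)\<in>Sigma {1..L} (\<lambda>i. {1..q i}). F i k)"
    apply (rule prod.reindex_bij_witness[where i = "\<lambda>(i,k). (k,i)" and j = "\<lambda>(k,i). (i,k)"])
    subgoal for a by (cases a) simp
    subgoal for a using swap_memb[of L q "fst a" "snd a", OF Q1 Q2] by (cases a) simp
    subgoal for a by (cases a) simp
    subgoal for a using swap_memb[of L q "snd a" "fst a", OF Q1 Q2] by (cases a) simp
    subgoal for a by (cases a) simp
    done
  also have "\<dots> = (\<Prod>i\<in>{1..L}. \<Prod>k\<in>{1..q i}. F i k)"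
    by (simp add: prod.Sigma)
  finally show ?thesis .
qed



lemma lemK:
  fixes y :: "'a::field"
  assumes nz: "nzall y"
    and Q1: "\<And>i. L < i \<Longrightarrow> q i = 0"
    and Q2: "\<And>i i'. 1 \<le> i \<Longrightarrow> i \<le> i' \<Longrightarrow> q i' \<le> q i"
  shows "sh y (- int (q 1)) * (\<Prod>k\<in>{1..q 1}. sh y (int (cnj q k) - int k + 1) / sh y (int (cnj q k) - int k))
       = sh y (int L) * (\<Prod>i\<in>{1..L}. sh y (int i - int (q i) - 1) / sh y (int i - int (q i)))"
proof -
  define \<Phi> where "\<Phi> = (\<Prod>i\<in>{1..L}. \<Prod>k\<in>{1..q i}. phi (sh y (int i - int k)))"
  have "(\<Prod>k\<in>{1..q 1}. sh y (int (cnj q k) - int k + 1) / sh y (int (cnj q k) - int k))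
     = (\<Prod>k\<in>{1..q 1}. sh y (1 - int k) / sh y (- int k) * (\<Prod>i\<in>{1..cnj q k}. phi (sh y (int i - int k))))"
    using K1[OF nz] by simp
  also have "\<dots> = (\<Prod>k\<in>{1..q 1}. sh y (0 - int k + 1) / sh y (0 - int k)) * \<Phi>"
    unfolding prod.distrib \<Phi>_def
    using swapK[of L q "\<lambda>i k. phi (sh y (int i - int k))", OF Q1 Q2] by simp
  also have "\<dots> = sh y 0 / sh y (- int (q 1)) * \<Phi>"
  proof -
    have "(\<Prod>k\<in>{1..q 1}. sh y (0 - int k + 1) / sh y (0 - int k)) = sh y 0 / sh y (0 - int (q 1))"
      by (rule K3'[OF nz])
    then show ?thesis by simp
  qed
  finally have l: "(\<Prod>k\<in>{1..q 1}. sh y (int (cnj q k) - int k + 1) / sh y (int (cnj q k) - int k)) = sh y 0 / sh y (- int (q 1)) * \<Phi>" .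
  have "(\<Prod>i\<in>{1..L}. sh y (int i - int (q i) - 1) / sh y (int i - int (q i)))
    = (\<Prod>i\<in>{1..L}. sh y (int i - 1) / sh y (int i) * (\<Prod>k\<in>{1..q i}. phi (sh y (int i - int k))))"
    using K2[OF nz] by simp
  also have "\<dots> = (\<Prod>i\<in>{1..L}. sh y (0 + int i - 1) / sh y (0 + int i)) * \<Phi>"
    unfolding prod.distrib \<Phi>_def by simp
  also have "\<dots> = sh y 0 / sh y (int L) * \<Phi>"
  proof -
    have "(\<Prod>i\<in>{1..L}. sh y (0 + int i - 1) / sh y (0 + int i)) = sh y 0 / sh y (0 + int L)"
      by (rule K3[OF nz])
    then show ?thesis by simp
  qed
  finally have r: "(\<Prod>i\<in>{1..L}. sh y (int i - int (q i) - 1) / sh y (int i - int (q i))) = sh y 0 / sh y (int L) * \<Phi>" .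
  show ?thesis unfolding l r using nz by simp
qed




definition G :: "'a::field \<Rightarrow> nat \<Rightarrow> 'a" where
  "G x n = (\<Prod>t\<in>{1..n}. of_nat t + x)"
definition H :: "'a::field \<Rightarrow> nat \<Rightarrow> 'a" where
  "H x n = (\<Prod>t\<in>{1..n}. of_nat t - x)"

lemma reidx_int:
  "(\<Prod>j\<in>{1..n}. f (int j + c)) = (\<Prod>t\<in>{c+1..c+int n}. (f t :: 'a::comm_monoid_mult))"
  apply (rule prod.reindex_bij_witness[where i = "\<lambda>t. nat (t - c)" and j = "\<lambda>j. int j + c"])
  by auto

lemma reidx_neg:
  "(\<Prod>j\<in>{1..n}. f (- int j)) = (\<Prod>t\<in>{- int n..-1}. (f t :: 'a::comm_monoid_mult))"
  apply (rule prod.reindex_bij_witness[where i = "\<lambda>t. nat (- t)" and j = "\<lambda>j. - int j"])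
  by auto

lemma split_int:
  fixes m k n :: int
  assumes "m \<le> k + 1" "k \<le> n"
  shows "(\<Prod>t\<in>{m..n}. f t) = (\<Prod>t\<in>{m..k}. f t) * (\<Prod>t\<in>{k+1..n}. (f t :: 'a::comm_monoid_mult))"
proof -
  have "{m..n} = {m..k} \<union> {k+1..n}" using assms by auto
  moreover have "{m..k} \<inter> {k+1..n} = {}" by auto
  ultimately show ?thesis by (simp add: prod.union_disjoint)
qed

lemma rowR:
  fixes x :: "'a::field" and q L i' :: nat
  assumes i1: "1 \<le> i'" and iL: "i' \<le> L"
  shows "(\<Prod>j\<in>{1..q}. of_int (int j - int i') - x) * (\<Prod>i\<in>{1..L}. sh x (int i' - int i - int q))
     = (-1)^(L+i') * x * G x (i'-1) * H x (q + L - i')"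
proof -
  define P where "P m n = (\<Prod>t\<in>{m..n}. of_int t - x)" for m n
  have a: "(\<Prod>j\<in>{1..q}. of_int (int j - int i') - x) = P (1 - int i') (int q - int i')"
    unfolding P_def using reidx_int[where f="\<lambda>t. of_int t - x" and n=q and c="- int i'"] by simp
  have "(\<Prod>i\<in>{1..L}. sh x (int i' - int i - int q)) = (\<Prod>i\<in>{1..L}. - (of_int (int i + (int q - int i')) - x))"
    by (rule prod.cong) (auto simp: sh_def)
  also have "\<dots> = (-1)^L * (\<Prod>i\<in>{1..L}. of_int (int i + (int q - int i')) - x)"
    by (subst prod_uminus) simp
  also have "\<dots> = (-1)^L * P (int q - int i' + 1) (int q - int i' + int L)"
    unfolding P_def using reidx_int[where f="\<lambda>t. of_int t - x" and n=L and c="int q - int i'"] by simp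
  finally have b: "(\<Prod>i\<in>{1..L}. sh x (int i' - int i - int q)) = (-1)^L * P (int q - int i' + 1) (int q - int i' + int L)" .
  have c: "P (1 - int i') (int q - int i') * P (int q - int i' + 1) (int q - int i' + int L) = P (1 - int i') (int q - int i' + int L)"
    unfolding P_def by (rule split_int[symmetric]) (use iL in auto)
  have d: "P (1 - int i') (int q - int i' + int L) = P (1 - int i') (-1) * P 0 0 * P 1 (int q - int i' + int L)"
  proof -
    have "P (1 - int i') (int q - int i' + int L) = P (1 - int i') (-1) * P 0 (int q - int i' + int L)"
      unfolding P_def using split_int[where f="\<lambda>t. of_int t - x" and m="1 - int i'" and k="-1" and n="int q - int i' + int L"] i1 iL by simp
    moreover have "P 0 (int q - int i' + int L) = P 0 0 * P 1 (int q - int i' + int L)"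
      unfolding P_def using split_int[where f="\<lambda>t. of_int t - x" and m=0 and k=0 and n="int q - int i' + int L"] i1 iL by simp
    ultimately show ?thesis by (simp add: mult.assoc)
  qed
  have e1: "P 1 (int q - int i' + int L) = H x (q + L - i')"
    unfolding P_def H_def using reidx_int[where f="\<lambda>t. of_int t - x" and n="q + L - i'" and c=0] iL by (simp add: algebra_simps)
  have "P (1 - int i') (-1) = (\<Prod>j\<in>{1..i'-1}. of_int (- int j) - x)"
    unfolding P_def using reidx_neg[where f="\<lambda>t. of_int t - x" and n="i'-1"] i1 by simp
  also have "\<dots> = (\<Prod>j\<in>{1..i'-1}. - (of_nat j + x))"
    by (rule prod.cong) auto
  also have "\<dots> = (-1)^(i'-1) * G x (i'-1)"
    unfolding G_def by (subst prod_uminus) simp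
  finally have e2: "P (1 - int i') (-1) = (-1)^(i'-1) * G x (i'-1)" .
  have e3: "P 0 0 = - x" unfolding P_def by simp
  have sgn: "(-1::'a)^L * ((-1)^(i'-1) * (- x)) = (-1)^(L+i') * x"
  proof -
    have "i' = Suc (i' - 1)" using i1 by simp
    then have "(-1::'a)^(L+i') = (-1)^L * (-1)^(i'-1) * (-1)"
      by (metis power_Suc2 power_add mult.assoc add_Suc_right)
    then show ?thesis by simp
  qed
  have "(\<Prod>j\<in>{1..q}. of_int (int j - int i') - x) * (\<Prod>i\<in>{1..L}. sh x (int i' - int i - int q))
     = (-1)^L * (P (1 - int i') (int q - int i') * P (int q - int i' + 1) (int q - int i' + int L))"
    unfolding a b by (simp only: mult.assoc mult.left_commute)
  also have "\<dots> = (-1)^L * (((-1)^(i'-1) * G x (i'-1)) * (- x) * H x (q + L - i'))"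
    unfolding c d e1 e2 e3 ..
  also have "\<dots> = ((-1)^L * ((-1)^(i'-1) * (- x))) * G x (i'-1) * H x (q + L - i')"
    by (simp only: mult.assoc mult.left_commute mult.commute)
  also have "\<dots> = (-1)^(L+i') * x * G x (i'-1) * H x (q + L - i')"
    unfolding sgn ..
  finally show ?thesis .
qed




lemma sh_sh: "sh (sh x c) d = sh x (c + d)" by (simp add: sh_def)
lemma nzall_sh: "nzall x \<Longrightarrow> nzall (sh x c)"
  unfolding nzall_def by (metis sh_def sh_sh sh_nz nzall_def)
lemma to_sh: "of_int c + x = sh x c" by (simp add: sh_def add.commute)

lemma G_split:
  fixes x :: "'a::field"
  assumes "i \<le> L"
  shows "G x (p + L - i) = G x (L - i) * (\<Prod>j\<in>{1..p}. sh x (int j - int i + int L))"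
proof -
  have "{1..p + L - i} = {1..L - i} \<union> {L - i + 1..L - i + p}" using assms by auto
  moreover have "{1..L - i} \<inter> {L - i + 1..L - i + p} = {}" by auto
  ultimately have "G x (p + L - i) = G x (L - i) * (\<Prod>t\<in>{L - i + 1..L - i + p}. of_nat t + x)"
    unfolding G_def by (simp add: prod.union_disjoint)
  also have "(\<Prod>t\<in>{L - i + 1..L - i + p}. of_nat t + x) = (\<Prod>j\<in>{1..p}. sh x (int j - int i + int L))"
  proof -
    have "(\<Prod>t\<in>{L - i + 1..L - i + p}. of_nat t + x) = (\<Prod>t\<in>{1 + (L - i)..p + (L - i)}. of_nat t + x)"
      by (simp add: add.commute)
    also have "\<dots> = (\<Prod>j\<in>{1..p}. of_nat (j + (L - i)) + x)"
      by (rule prod.shift_bounds_cl_nat_ivl)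
    also have "\<dots> = (\<Prod>j\<in>{1..p}. sh x (int j - int i + int L))"
    proof (rule prod.cong[OF refl])
      fix j
      have "of_nat (j + (L - i)) = (of_int (int j - int i + int L) :: 'a)"
        using assms by (simp add: of_nat_diff)
      then show "of_nat (j + (L - i)) + x = sh x (int j - int i + int L)" by (simp add: sh_def)
    qed
    finally show ?thesis .
  qed
  finally show ?thesis .
qed

lemma sum_choose: "(\<Sum>i\<in>{1..L}. i) + (L choose 2) = L * L"
proof (induction L)
  case 0 then show ?case by simp
next
  case (Suc L)
  have c: "Suc L choose 2 = L + (L choose 2)"
    by (simp add: numeral_2_eq_2)
  show ?case using Suc by (simp add: c)
qed

lemma sign_lemma: "(\<Prod>i\<in>{1..L}. (-1::'a::comm_ring_1)^(L+i)) = (-1)^(L choose 2)"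
proof -
  have "(\<Prod>i\<in>{1..L}. (-1::'a)^(L+i)) = (-1)^(\<Sum>i\<in>{1..L}. L + i)" by (simp add: power_sum)
  also have "(\<Sum>i\<in>{1..L}. L + i) = L * L + (\<Sum>i\<in>{1..L}. i)" by (simp add: sum.distrib)
  finally have e: "(\<Prod>i\<in>{1..L}. (-1::'a)^(L+i)) = (-1)^(L * L + (\<Sum>i\<in>{1..L}. i))" .
  have "L * L + (\<Sum>i\<in>{1..L}. i) + (L choose 2) = 2 * (L * L)" using sum_choose[of L] by simp
  then have u: "(-1::'a)^(L * L + (\<Sum>i\<in>{1..L}. i)) * (-1)^(L choose 2) = 1"
    by (simp only: power_add[symmetric] power_mult) simp
  have v: "(-1::'a)^(L choose 2) * (-1)^(L choose 2) = 1"
    by (simp only: power_mult_distrib[symmetric]) simp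
  define U where "U = (-1::'a)^(L * L + (\<Sum>i\<in>{1..L}. i))"
  define V where "V = (-1::'a)^(L choose 2)"
  have "U = U * (V * V)" using v unfolding V_def by simp
  also have "\<dots> = (U * V) * V" by (simp only: mult.assoc)
  also have "\<dots> = V" using u unfolding U_def V_def by simp
  finally have "(-1::'a)^(L * L + (\<Sum>i\<in>{1..L}. i)) = (-1)^(L choose 2)" unfolding U_def V_def .
  then show ?thesis unfolding e .
qed




lemma cell:
  fixes x :: "'a::field"
  assumes nz: "nzall x"
    and Q1: "\<And>i. L < i \<Longrightarrow> q i = 0"
    and Q2: "\<And>i i'. 1 \<le> i \<Longrightarrow> i \<le> i' \<Longrightarrow> q i' \<le> q i"
  shows "(of_int (int j - int i - int (q 1)) + x) *
     (\<Prod>k\<in>{1..q 1}. (of_int (int j - int i + int (cnj q k) - int k + 1) + x) /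
        (of_int (int j - int i + int (cnj q k) - int k) + x))
   = sh x (int j - int i + int L) *
     (\<Prod>i'\<in>{1..L}. sh x (int j - int i + int i' - int (q i') - 1) / sh x (int j - int i + int i' - int (q i')))"
proof -
  have K: "sh (sh x (int j - int i)) (- int (q 1)) * (\<Prod>k\<in>{1..q 1}. sh (sh x (int j - int i)) (int (cnj q k) - int k + 1) / sh (sh x (int j - int i)) (int (cnj q k) - int k))
       = sh (sh x (int j - int i)) (int L) * (\<Prod>i'\<in>{1..L}. sh (sh x (int j - int i)) (int i' - int (q i') - 1) / sh (sh x (int j - int i)) (int i' - int (q i')))"
    by (rule lemK[OF nzall_sh[OF nz] Q1 Q2])
  show ?thesis unfolding to_sh using K unfolding sh_sh by (simp add: algebra_simps)
qed

lemma main_generic: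
  fixes x :: "'a::field" and p q :: "nat \<Rightarrow> nat"
  assumes nz: "nzall x"
    and P1: "\<And>i. L < i \<Longrightarrow> p i = 0"
    and Q1: "\<And>i. L < i \<Longrightarrow> q i = 0"
    and Q2: "\<And>i i'. 1 \<le> i \<Longrightarrow> i \<le> i' \<Longrightarrow> q i' \<le> q i"
  shows "(\<Prod>i\<in>{1..L}. \<Prod>j\<in>{1..q i}. of_int (int j - int i) - x) *
    (\<Prod>i\<in>{1..L}. \<Prod>j\<in>{1..p i}. (of_int (int j - int i - int (q 1)) + x) *
       (\<Prod>k\<in>{1..q 1}. (of_int (int j - int i + int (cnj q k) - int k + 1) + x) /
          (of_int (int j - int i + int (cnj q k) - int k) + x)))
  = (-1)^(L choose 2) * x^L *
    ((\<Prod>i\<in>{1..L}. \<Prod>t\<in>{1..p i + L - i}. of_nat t + x) * (\<Prod>i\<in>{1..L}. \<Prod>t\<in>{1..q i + L - i}. of_nat t - x)) /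
    (\<Prod>i\<in>{1..L}. \<Prod>i'\<in>{1..L}. of_int (int (p i + L - i) - int (q i' + L - i')) + x)"
proof -
  define A where "A i' = (\<Prod>j\<in>{1..q i'}. of_int (int j - int i') - x)" for i'
  define C where "C i = (\<Prod>j\<in>{1..p i}. sh x (int j - int i + int L))" for i
  define N where "N i i' = sh x (int i' - int i - int (q i'))" for i i'
  define D where "D i i' = sh x (int (p i) - int i + int i' - int (q i'))" for i i'
  have row: "(\<Prod>j\<in>{1..p i}. (of_int (int j - int i - int (q 1)) + x) *
       (\<Prod>k\<in>{1..q 1}. (of_int (int j - int i + int (cnj q k) - int k + 1) + x) /
          (of_int (int j - int i + int (cnj q k) - int k) + x)))
      = C i * (\<Prod>i'\<in>{1..L}. N i i' / D i i')" for i
  proof -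
    have "(\<Prod>j\<in>{1..p i}. (of_int (int j - int i - int (q 1)) + x) *
       (\<Prod>k\<in>{1..q 1}. (of_int (int j - int i + int (cnj q k) - int k + 1) + x) /
          (of_int (int j - int i + int (cnj q k) - int k) + x)))
      = (\<Prod>j\<in>{1..p i}. sh x (int j - int i + int L) *
     (\<Prod>i'\<in>{1..L}. sh x (int j - int i + int i' - int (q i') - 1) / sh x (int j - int i + int i' - int (q i'))))"
      by (rule prod.cong[OF refl]) (rule cell[where x=x and L=L and q=q, OF nz Q1 Q2])
    also have "\<dots> = C i * (\<Prod>i'\<in>{1..L}. \<Prod>j\<in>{1..p i}. sh x (int j - int i + int i' - int (q i') - 1) / sh x (int j - int i + int i' - int (q i')))"
      unfolding prod.distrib C_def by (rule arg_cong[where f="\<lambda>z. _ * z"], rule prod.swap)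
    also have "\<dots> = C i * (\<Prod>i'\<in>{1..L}. N i i' / D i i')"
    proof -
      have "(\<Prod>j\<in>{1..p i}. sh x (int j - int i + int i' - int (q i') - 1) / sh x (int j - int i + int i' - int (q i')))
          = N i i' / D i i'" for i'
      proof -
        have "(\<Prod>j\<in>{1..p i}. sh x ((int i' - int i - int (q i')) + int j - 1) / sh x ((int i' - int i - int (q i')) + int j))
          = sh x (int i' - int i - int (q i')) / sh x ((int i' - int i - int (q i')) + int (p i))"
          by (rule K3[OF nz])
        then show ?thesis unfolding N_def D_def by (simp add: algebra_simps)
      qed
      then show ?thesis by simp
    qed
    finally show ?thesis .
  qed
  have Deq: "of_int (int (p i + L - i) - int (q i' + L - i')) + x = D i i'" if "i \<in> {1..L}" "i' \<in> {1..L}" for i i'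
    using that unfolding D_def to_sh by (simp add: of_nat_diff algebra_simps)
  have Dnz: "(\<Prod>i\<in>{1..L}. \<Prod>i'\<in>{1..L}. D i i') \<noteq> 0"
    unfolding D_def using nz by (simp add: prod_zero_iff)
  have Geq: "(\<Prod>i\<in>{1..L}. \<Prod>t\<in>{1..p i + L - i}. of_nat t + x) = (\<Prod>i\<in>{1..L}. G x (L - i)) * (\<Prod>i\<in>{1..L}. C i)"
    unfolding prod.distrib[symmetric] C_def
    by (rule prod.cong[OF refl]) (use G_split in \<open>auto simp: G_def\<close>)
  have Gre: "(\<Prod>i\<in>{1..L}. G x (i - 1)) = (\<Prod>i\<in>{1..L}. G x (L - i))"
    by (rule prod.reindex_bij_witness[where i = "\<lambda>i. L + 1 - i" and j = "\<lambda>i. L + 1 - i"]) auto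
  have AN: "(\<Prod>i'\<in>{1..L}. A i') * (\<Prod>i\<in>{1..L}. \<Prod>i'\<in>{1..L}. N i i')
      = (-1)^(L choose 2) * x^L * (\<Prod>i\<in>{1..L}. G x (L - i)) * (\<Prod>i'\<in>{1..L}. H x (q i' + L - i'))"
  proof -
    have "(\<Prod>i'\<in>{1..L}. A i') * (\<Prod>i\<in>{1..L}. \<Prod>i'\<in>{1..L}. N i i') = (\<Prod>i'\<in>{1..L}. A i' * (\<Prod>i\<in>{1..L}. N i i'))"
      unfolding prod.distrib by (rule arg_cong[where f="\<lambda>z. _ * z"], rule prod.swap)
    also have "\<dots> = (\<Prod>i'\<in>{1..L}. (-1)^(L+i') * x * G x (i'-1) * H x (q i' + L - i'))"
      by (rule prod.cong[OF refl]) (use rowR in \<open>auto simp: A_def N_def\<close>)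
    also have "\<dots> = (\<Prod>i'\<in>{1..L}. (-1)^(L+i')) * x^L * (\<Prod>i\<in>{1..L}. G x (i - 1)) * (\<Prod>i'\<in>{1..L}. H x (q i' + L - i'))"
      by (simp add: prod.distrib)
    finally show ?thesis unfolding sign_lemma Gre .
  qed
  have LHS: "(\<Prod>i\<in>{1..L}. \<Prod>j\<in>{1..q i}. of_int (int j - int i) - x) *
    (\<Prod>i\<in>{1..L}. \<Prod>j\<in>{1..p i}. (of_int (int j - int i - int (q 1)) + x) *
       (\<Prod>k\<in>{1..q 1}. (of_int (int j - int i + int (cnj q k) - int k + 1) + x) /
          (of_int (int j - int i + int (cnj q k) - int k) + x)))
     = (\<Prod>i'\<in>{1..L}. A i') * (\<Prod>i\<in>{1..L}. C i) * (\<Prod>i\<in>{1..L}. \<Prod>i'\<in>{1..L}. N i i') / (\<Prod>i\<in>{1..L}. \<Prod>i'\<in>{1..L}. D i i')"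
    unfolding row A_def[symmetric] by (simp add: prod.distrib prod_dividef)
  have RHSD: "(\<Prod>i\<in>{1..L}. \<Prod>i'\<in>{1..L}. of_int (int (p i + L - i) - int (q i' + L - i')) + x) = (\<Prod>i\<in>{1..L}. \<Prod>i'\<in>{1..L}. D i i')"
    by (rule prod.cong[OF refl], rule prod.cong[OF refl], rule Deq, assumption+)
  have H': "(\<Prod>i\<in>{1..L}. \<Prod>t\<in>{1..q i + L - i}. of_nat t - x) = (\<Prod>i'\<in>{1..L}. H x (q i' + L - i'))"
    unfolding H_def ..
  show ?thesis unfolding LHS RHSD Geq H'
    using AN Dnz by (simp add: field_simps)
qed




lemma of_int_fract': "(of_int c :: 'a::idom fract) = Fract (of_int c) 1"
proof (cases "c \<ge> 0")
  case True
  then obtain n where "c = int n" by (metis nonneg_int_cases)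
  then show ?thesis by (simp add: of_nat_fract)
next
  case False
  then obtain n where "c = - int n" by (metis linorder_not_le less_imp_le neg_0_le_iff_le nonneg_int_cases add.inverse_inverse)
  then show ?thesis by (simp add: of_nat_fract)
qed

lemma nzall_xind: "nzall xind"
  unfolding nzall_def
proof
  fix c :: int
  have e: "xind + of_int c = Fract ([:0, 1:] + of_int c) 1"
    unfolding xind_def of_int_fract' by simp
  have "coeff ([:0, 1:] + of_int c :: rat poly) 1 = 1"
    by (simp add: of_int_poly)
  then have "([:0, 1:] + of_int c :: rat poly) \<noteq> 0" by (metis coeff_0 zero_neq_one)
  then show "xind + of_int c \<noteq> 0"
    unfolding e by (simp add: Zero_fract_def eq_fract)
qed

lemma part_props:
  assumes "is_partition lam" "length lam \<le> L"
  shows "\<And>i. L < i \<Longrightarrow> part lam i = 0"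
    and "\<And>i i'. 1 \<le> i \<Longrightarrow> i \<le> i' \<Longrightarrow> part lam i' \<le> part lam i"
proof -
  fix i assume "L < i" then show "part lam i = 0" using assms(2) by (simp add: part_def)
next
  fix i i' :: nat assume ii: "1 \<le> i" "i \<le> i'"
  show "part lam i' \<le> part lam i"
  proof (cases "i' \<le> length lam")
    case False then show ?thesis by (simp add: part_def)
  next
    case True
    have s: "sorted_wrt (\<ge>) lam" using assms(1) by (simp add: is_partition_def)
    show ?thesis
    proof (cases "i = i'")
      case True then show ?thesis by simp
    next
      case False
      then have "i - 1 < i' - 1" using ii by simp
      moreover have "i' - 1 < length lam" using True ii by simp
      ultimately have "lam ! (i' - 1) \<le> lam ! (i - 1)"
        using s by (simp add: sorted_wrt_iff_nth_less)
      then show ?thesis using ii True by (simp add: part_def)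
    qed
  qed
qed

lemma diagram_prod:
  assumes "length lam \<le> L"
  shows "(\<Prod>(i, j)\<in>diagram lam. f i j) = (\<Prod>i\<in>{1..L}. \<Prod>j\<in>{1..part lam i}. (f i j :: 'a::comm_monoid_mult))"
proof -
  have "diagram lam = Sigma {1..L} (\<lambda>i. {1..part lam i})"
  proof (rule set_eqI)
    fix z :: "nat \<times> nat"
    obtain i j where z: "z = (i, j)" by force
    have "1 \<le> j \<Longrightarrow> j \<le> part lam i \<Longrightarrow> i \<le> L" using assms
      by (cases "i \<le> length lam") (auto simp: part_def)
    then show "z \<in> diagram lam \<longleftrightarrow> z \<in> Sigma {1..L} (\<lambda>i. {1..part lam i})"
      unfolding z diagram_def by auto
  qed
  then show ?thesis by (simp add: prod.Sigma)
qed

lemma beta_prod: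
  assumes "is_partition lam" "length lam \<le> L"
  shows "(\<Prod>a\<in>beta_set L lam. f a) = (\<Prod>i\<in>{1..L}. (f (part lam i + L - i) :: 'a::comm_monoid_mult))"
proof -
  have b: "beta_set L lam = (\<lambda>i. part lam i + L - i) ` {1..L}"
    unfolding beta_set_def by auto
  have mono: "part lam i' + L - i' < part lam i + L - i" if "1 \<le> i" "i < i'" "i' \<le> L" for i i'
    using part_props(2)[OF assms, of i i'] that by simp
  have "inj_on (\<lambda>i. part lam i + L - i) {1..L}"
  proof (rule inj_onI)
    fix i i' assume "i \<in> {1..L}" "i' \<in> {1..L}" "part lam i + L - i = part lam i' + L - i'"
    then show "i = i'" using mono[of i i'] mono[of i' i] by (cases "i < i'"; cases "i' < i") auto
  qed
  then show ?thesis unfolding b by (simp add: prod.reindex)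
qed

theorem lemma3p2:
  fixes lam mu :: "nat list" and L :: nat
  assumes "is_partition lam" and "is_partition mu"
    and "L \<ge> max (plen lam) (plen mu)"
  shows "Xfun lam mu = Yfun L lam mu"
proof -
  have lL: "length lam \<le> L" and mL: "length mu \<le> L" using assms(3) by (auto simp: plen_def)
  note P = part_props[OF assms(1) lL] and Q = part_props[OF assms(2) mL]
  have cj: "conjp mu = cnj (part mu)" by (rule ext) (simp add: conjp_def cnj_def)
  have X: "Xfun lam mu = (\<Prod>i\<in>{1..L}. \<Prod>j\<in>{1..part mu i}. of_int (int j - int i) - xind) *
    (\<Prod>i\<in>{1..L}. \<Prod>j\<in>{1..part lam i}. (of_int (int j - int i - int (part mu 1)) + xind) *
       (\<Prod>k\<in>{1..part mu 1}. (of_int (int j - int i + int (cnj (part mu) k) - int k + 1) + xind) /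
          (of_int (int j - int i + int (cnj (part mu) k) - int k) + xind)))"
    unfolding Xfun_def cj diagram_prod[OF lL] diagram_prod[OF mL] ..
  have Y: "Yfun L lam mu = (-1)^(L choose 2) * xind^L *
    ((\<Prod>i\<in>{1..L}. \<Prod>t\<in>{1..part lam i + L - i}. of_nat t + xind) * (\<Prod>i\<in>{1..L}. \<Prod>t\<in>{1..part mu i + L - i}. of_nat t - xind)) /
    (\<Prod>i\<in>{1..L}. \<Prod>i'\<in>{1..L}. of_int (int (part lam i + L - i) - int (part mu i' + L - i')) + xind)"
    unfolding Yfun_def prod.cartesian_product[symmetric] beta_prod[OF assms(1) lL] beta_prod[OF assms(2) mL] ..
  show ?thesis unfolding X Y
    by (rule main_generic[OF nzall_xind P(1) Q(1) Q(2)])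
qed


end
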